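(* Let $\mathbb{K}$ be a field of characteristic $0$, $\mathcal{S}=\mathbb{K}[x_0,\dots,x_n]$, and let $f\in\mathcal{S}_d$ have a Generalized Additive Decomposition $f=\sum_{i=1}^s\omega_i\ell_i^{d-k_i}$ with each $\ell_i=x_0+\xi_{i,1}x_1+\dots+\xi_{i,n}x_n$. Let $\underline\varphi:=\sum_{i=1}^s\omega_i^{d,\ell_i,\mathbf x}(\underline{\mathbf z})e_{\ell_i}(\underline{\mathbf z})$ and let $I_{\underline\varphi}$ be the homogeneous ideal spanned by all homogeneous $p\in\mathcal{S}$ with $p\star\underline\varphi=0$. Then $I_{\underline\varphi}$ is apolar to $f$, i.e. $f^*(p)=0$ for every $p\in(I_{\underline\varphi})_d$.
   Context: $\mathcal{S}^*$ is identified with $\mathbb{K}[[z_0,\dots,z_n]]$ via $\sum_\alpha\varphi_\alpha\underline{\mathbf z}^\alpha/\alpha!\leftrightarrow(\underline{\mathbf x}^\alpha\mapsto\varphi_\alpha)$; $p\star\varphi$ is $q\mapsto\varphi(pq)$; $e_\ell(\underline{\mathbf z})=\exp(\sum_i\underline\xi_iz_i)$ for $\ell=\sum\underline\xi_ix_i$; $f^*:=\frac1{d!}f(z_0,\dots,z_n)\in\mathcal{S}_d^*$. A GAD of $f$ is $f=\sum_i\omega_i\ell_i^{d-k_i}$ with $0\le k_i\le d$, $\omega_i\in\mathcal{S}_{k_i}$, $\ell_i\in\mathcal{S}_1$ pairwise non-proportional, $\ell_i\nmid\omega_i$. For $\mathbf x=(x_1,\dots,x_n)$, writing $\omega_i=\sum_{j}\omega_{i,j}\ell_i^{k_i-j}$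 with $\omega_{i,j}\in\mathbb{K}[x_1,\dots,x_n]_j$, $\omega_i^{d,\ell_i,\mathbf x}:=\frac1{d!}\sum_j(d-j)!\,\omega_{i,j}$, read in the variables $\underline{\mathbf z}$. *)

theory Defs
  imports "HOL-Library.Poly_Mapping"
begin

(* Multivariate polynomials: monomials (exponent vectors) are finitely supported maps
  nat \<Rightarrow>\<^sub>0 nat (variable x_i has index i); polynomials are finitely supported maps
  from monomials to coefficients. *)

type_synonym mon = "nat \<Rightarrow>\<^sub>0 nat"
type_synonym 'a mpoly = "mon \<Rightarrow>\<^sub>0 'a"

definition mdeg :: "mon \<Rightarrow> nat" where
  "mdeg \<alpha> = (\<Sum>i\<in>Poly_Mapping.keys \<alpha>. Poly_Mapping.lookup \<alpha> i)"

definition mfact :: "mon \<Rightarrow> nat" where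
  "mfact \<alpha> = (\<Prod>i\<in>Poly_Mapping.keys \<alpha>. fact (Poly_Mapping.lookup \<alpha> i))"

definition mon_in_vars :: "nat set \<Rightarrow> mon \<Rightarrow> bool" where
  "mon_in_vars V \<alpha> \<longleftrightarrow> Poly_Mapping.keys \<alpha> \<subseteq> V"

definition poly_in_vars :: "nat set \<Rightarrow> 'a::zero mpoly \<Rightarrow> bool" where
  "poly_in_vars V p \<longleftrightarrow> (\<forall>\<alpha>\<in>Poly_Mapping.keys p. mon_in_vars V \<alpha>)"

definition homog :: "nat \<Rightarrow> 'a::zero mpoly \<Rightarrow> bool" where
  "homog d p \<longleftrightarrow> (\<forall>\<alpha>\<in>Poly_Mapping.keys p. mdeg \<alpha> = d)"

definition inS :: "nat \<Rightarrow> 'a::zero mpoly \<Rightarrow> bool" where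
  "inS n p \<longleftrightarrow> poly_in_vars {..n} p"

definition inSd :: "nat \<Rightarrow> nat \<Rightarrow> 'a::zero mpoly \<Rightarrow> bool" where
  "inSd n d p \<longleftrightarrow> inS n p \<and> homog d p"

definition Var :: "nat \<Rightarrow> 'a::{zero,one} mpoly" where
  "Var i = Poly_Mapping.single (Poly_Mapping.single i 1) 1"

definition Const :: "'a::zero \<Rightarrow> 'a mpoly" where
  "Const c = Poly_Mapping.single 0 c"

(* Elements of the dual S^*: identified with formal power series in z_0,...,z_n.
  We store a power series by its ordinary coefficients (mon \<Rightarrow> 'a, coefficient of z^\<alpha>);
  the series \<Sum> \<phi>_\<alpha> z^\<alpha>/\<alpha>! corresponds to the functional x^\<alpha> \<mapsto> \<phi>_\<alpha>, i.e.
  the functional takes the value \<alpha>! * (coefficient of z^\<alpha>) on x^\<alpha>. *)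

type_synonym 'a series = "mon \<Rightarrow> 'a"

definition mon_le :: "mon \<Rightarrow> mon \<Rightarrow> bool" where
  "mon_le \<beta> \<alpha> \<longleftrightarrow> (\<forall>i. Poly_Mapping.lookup \<beta> i \<le> Poly_Mapping.lookup \<alpha> i)"

definition ser_mult :: "'a::comm_semiring_1 series \<Rightarrow> 'a series \<Rightarrow> 'a series" where
  "ser_mult s t \<alpha> = (\<Sum>\<beta>\<in>{\<beta>. mon_le \<beta> \<alpha>}. s \<beta> * t (\<alpha> - \<beta>))"

definition dual_val :: "'a::comm_semiring_1 series \<Rightarrow> mon \<Rightarrow> 'a" where
  "dual_val s \<alpha> = of_nat (mfact \<alpha>) * s \<alpha>"

definition apply_dual :: "'a::comm_semiring_1 series \<Rightarrow> 'a mpoly \<Rightarrow> 'a" where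
  "apply_dual s p = (\<Sum>\<alpha>\<in>Poly_Mapping.keys p. Poly_Mapping.lookup p \<alpha> * dual_val s \<alpha>)"

(* p \<star> \<phi> is the functional q \<mapsto> \<phi>(p q); it is zero in S^* iff it vanishes on all q in S. *)
definition star_zero :: "nat \<Rightarrow> 'a::comm_semiring_1 mpoly \<Rightarrow> 'a series \<Rightarrow> bool" where
  "star_zero n p s \<longleftrightarrow> (\<forall>q. inS n q \<longrightarrow> apply_dual s (p * q) = 0)"

definition poly_ser :: "'a::zero mpoly \<Rightarrow> 'a series" where
  "poly_ser p = Poly_Mapping.lookup p"

(* e_L(z) = exp(\<Sum>_i \<xi>_i z_i) for L = \<Sum>_i \<xi>_i x_i: coefficient of z^\<alpha> is \<xi>^\<alpha>/\<alpha>!. *)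
definition exp_lin :: "'a::field_char_0 mpoly \<Rightarrow> 'a series" where
  "exp_lin L \<alpha> =
     (\<Prod>i\<in>Poly_Mapping.keys \<alpha>. Poly_Mapping.lookup L (Poly_Mapping.single i 1) ^ Poly_Mapping.lookup \<alpha> i) / of_nat (mfact \<alpha>)"

(* f^* = (1/d!) f(z_0,...,z_n) as an element of S^*_d. *)
definition fstar :: "nat \<Rightarrow> 'a::field_char_0 mpoly \<Rightarrow> 'a series" where
  "fstar d f \<alpha> = Poly_Mapping.lookup f \<alpha> / of_nat (fact d)"

inductive_set ideal_gen :: "nat \<Rightarrow> 'a::comm_ring_1 mpoly set \<Rightarrow> 'a mpoly set"
  for n G where
  zero: "0 \<in> ideal_gen n G"
| gen: "g \<in> G \<Longrightarrow> inS n q \<Longrightarrow> q * g \<in> ideal_gen n G"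
| add: "a \<in> ideal_gen n G \<Longrightarrow> b \<in> ideal_gen n G \<Longrightarrow> a + b \<in> ideal_gen n G"

definition I_phi :: "nat \<Rightarrow> 'a::comm_ring_1 series \<Rightarrow> 'a mpoly set" where
  "I_phi n s = ideal_gen n {p. inS n p \<and> (\<exists>e. homog e p) \<and> star_zero n p s}"

end

theory Submission
  imports Defs
begin



lemma mon_add_eq_iff:
  fixes l q a :: mon
  shows "(a = l + q) \<longleftrightarrow> (mon_le l a \<and> q = a - l)"
  unfolding mon_le_def
  by (auto simp: poly_mapping_eq_iff fun_eq_iff lookup_add lookup_minus)

lemma lookup_mult_keys:
  fixes f g :: "'a::comm_semiring_1 mpoly"
  shows "Poly_Mapping.lookup (f * g) a =
    (\<Sum>l\<in>Poly_Mapping.keys f. if mon_le l a then Poly_Mapping.lookup f l * Poly_Mapping.lookup g (a - l) else 0)"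
proof -
  have inner: "(\<Sum>q. Poly_Mapping.lookup g q when a = l + q) = (if mon_le l a then Poly_Mapping.lookup g (a - l) else 0)" for l
    by (simp add: mon_add_eq_iff when_def)
  have "Poly_Mapping.lookup (f * g) a = (\<Sum>l. Poly_Mapping.lookup f l * (if mon_le l a then Poly_Mapping.lookup g (a - l) else 0))"
    by (simp add: lookup_mult inner)
  also have "\<dots> = (\<Sum>l\<in>Poly_Mapping.keys f. Poly_Mapping.lookup f l * (if mon_le l a then Poly_Mapping.lookup g (a - l) else 0))"
    by (rule Sum_any.expand_superset) (auto simp: in_keys_iff)
  finally show ?thesis by (simp add: if_distrib cong: if_cong)
qed

lemma mdeg_superset: "finite K \<Longrightarrow> Poly_Mapping.keys a \<subseteq> K \<Longrightarrow> mdeg a = (\<Sum>i\<in>K. Poly_Mapping.lookup a i)"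
  unfolding mdeg_def by (rule sum.mono_neutral_left) (auto simp: in_keys_iff)

lemma mfact_superset: "finite K \<Longrightarrow> Poly_Mapping.keys a \<subseteq> K \<Longrightarrow> mfact a = (\<Prod>i\<in>K. fact (Poly_Mapping.lookup a i))"
  unfolding mfact_def by (rule prod.mono_neutral_left) (auto simp: in_keys_iff)

lemma mdeg_add: "mdeg (a + b) = mdeg a + mdeg b"
proof -
  let ?K = "Poly_Mapping.keys a \<union> Poly_Mapping.keys b"
  have "mdeg (a + b) = (\<Sum>i\<in>?K. Poly_Mapping.lookup (a+b) i)"
    using keys_add[of a b] by (intro mdeg_superset) auto
  also have "\<dots> = (\<Sum>i\<in>?K. Poly_Mapping.lookup a i) + (\<Sum>i\<in>?K. Poly_Mapping.lookup b i)"
    by (simp add: lookup_add sum.distrib)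
  also have "\<dots> = mdeg a + mdeg b"
    by (simp add: mdeg_superset[of ?K a] mdeg_superset[of ?K b])
  finally show ?thesis .
qed

lemma mon_le_diff: "mon_le l a \<Longrightarrow> a = l + (a - l)"
  using mon_add_eq_iff by blast

lemma mdeg_diff: "mon_le l a \<Longrightarrow> mdeg (a - l) = mdeg a - mdeg l"
  by (metis mon_le_diff mdeg_add diff_add_inverse)

lemma mdeg_zero_iff: "mdeg a = 0 \<longleftrightarrow> a = 0"
proof -
  have "mdeg a = 0 \<longleftrightarrow> (\<forall>i\<in>Poly_Mapping.keys a. Poly_Mapping.lookup a i = 0)"
    unfolding mdeg_def by simp
  also have "\<dots> \<longleftrightarrow> a = 0"
  proof
    assume "\<forall>i\<in>Poly_Mapping.keys a. Poly_Mapping.lookup a i = 0"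
    then have "Poly_Mapping.lookup a i = 0" for i
      by (cases "i \<in> Poly_Mapping.keys a") (simp_all add: not_in_keys_iff_lookup_eq_zero)
    then show "a = 0" by (intro poly_mapping_eqI) simp
  qed simp
  finally show ?thesis .
qed

lemma mdeg_single: "mdeg (Poly_Mapping.single i (1::nat)) = 1"
  unfolding mdeg_def by simp

lemma finite_mon_le: "finite {b. mon_le b a}"
proof -
  define M where "M = Max (insert 0 (Poly_Mapping.lookup a ` Poly_Mapping.keys a))"
  define S where "S = {h. \<forall>x. (x \<in> Poly_Mapping.keys a \<longrightarrow> h x \<in> {0..M}) \<and> (x \<notin> Poly_Mapping.keys a \<longrightarrow> h x = (0::nat))}"
  have fS: "finite S" unfolding S_def
    by (rule finite_set_of_finite_funs) simp_all
  have sub: "Poly_Mapping.lookup ` {b. mon_le b a} \<subseteq> S"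
  proof
    fix h assume "h \<in> Poly_Mapping.lookup ` {b. mon_le b a}"
    then obtain b where le: "mon_le b a" and h: "h = Poly_Mapping.lookup b" by blast
    have "h x \<in> {0..M}" if "x \<in> Poly_Mapping.keys a" for x
    proof -
      have "Poly_Mapping.lookup a x \<le> M"
        unfolding M_def using that by (intro Max_ge) auto
      moreover have "Poly_Mapping.lookup b x \<le> Poly_Mapping.lookup a x" using le unfolding mon_le_def by blast
      ultimately show ?thesis unfolding h by simp
    qed
    moreover have "h x = 0" if "x \<notin> Poly_Mapping.keys a" for x
    proof -
      have "Poly_Mapping.lookup a x = 0" using that by (simp add: not_in_keys_iff_lookup_eq_zero)
      moreover have "Poly_Mapping.lookup b x \<le> Poly_Mapping.lookup a x" using le unfolding mon_le_def by blast
      ultimately show ?thesis unfolding h by simp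
    qed
    ultimately show "h \<in> S" unfolding S_def by blast
  qed
  have "finite (Poly_Mapping.lookup ` {b. mon_le b a})" using fS sub by (rule finite_subset[rotated])
  moreover have "inj_on Poly_Mapping.lookup {b. mon_le b a}"
    by (rule inj_onI, rule poly_mapping_eqI) simp
  ultimately show ?thesis by (rule finite_imageD)
qed




definition cf :: "'a::zero mpoly \<Rightarrow> nat \<Rightarrow> 'a" where
  "cf L i = Poly_Mapping.lookup L (Poly_Mapping.single i 1)"

lemma mon_le_single_iff: "mon_le (Poly_Mapping.single i 1) g \<longleftrightarrow> i \<in> Poly_Mapping.keys g"
  unfolding mon_le_def by (auto simp: lookup_single when_def in_keys_iff)

lemma lookup_lin_mult:
  fixes L Q :: "'a::comm_semiring_1 mpoly"
  assumes lin: "\<forall>\<mu>\<in>Poly_Mapping.keys L. \<exists>i. \<mu> = Poly_Mapping.single i 1"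
  shows "Poly_Mapping.lookup (L * Q) g = (\<Sum>i\<in>Poly_Mapping.keys g. cf L i * Poly_Mapping.lookup Q (g - Poly_Mapping.single i 1))"
proof -
  define I where "I = {i. Poly_Mapping.single i (1::nat) \<in> Poly_Mapping.keys L}"
  have KL: "Poly_Mapping.keys L = (\<lambda>i. Poly_Mapping.single i 1) ` I"
    using lin unfolding I_def by auto
  have inj: "inj (\<lambda>i. Poly_Mapping.single i (1::nat))"
    by (auto intro: injI simp: poly_mapping_eq_iff fun_eq_iff lookup_single when_def split: if_splits)
  have finI: "finite I"
  proof -
    have "finite ((\<lambda>i. Poly_Mapping.single i (1::nat)) ` I)" using KL by (metis finite_keys)
    then show ?thesis using inj by (metis finite_imageD inj_on_subset subset_UNIV)
  qed
  let ?h = "\<lambda>i. if i \<in> Poly_Mapping.keys g then cf L i * Poly_Mapping.lookup Q (g - Poly_Mapping.single i 1) else 0"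
  have "Poly_Mapping.lookup (L * Q) g = (\<Sum>l\<in>Poly_Mapping.keys L. if mon_le l g then Poly_Mapping.lookup L l * Poly_Mapping.lookup Q (g - l) else 0)"
    by (rule lookup_mult_keys)
  also have "\<dots> = (\<Sum>i\<in>I. ?h i)"
    unfolding KL using inj
    by (subst sum.reindex) (auto simp: inj_on_def mon_le_single_iff[simplified] cf_def intro!: sum.cong)
  also have "\<dots> = (\<Sum>i\<in>I \<union> Poly_Mapping.keys g. ?h i)"
    by (rule sum.mono_neutral_left) (use finI in \<open>auto simp: cf_def I_def in_keys_iff\<close>)
  also have "\<dots> = (\<Sum>i\<in>Poly_Mapping.keys g. ?h i)"
    by (rule sum.mono_neutral_right) (use finI in \<open>auto simp: cf_def I_def in_keys_iff\<close>)
  finally show ?thesis by simp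
qed

lemma exp_lin_superset:
  "finite K \<Longrightarrow> Poly_Mapping.keys g \<subseteq> K \<Longrightarrow>
   exp_lin L g = (\<Prod>i\<in>K. cf L i ^ Poly_Mapping.lookup g i) / of_nat (mfact g)"
  unfolding exp_lin_def cf_def
  by (subst prod.mono_neutral_left[of K]) (auto simp: in_keys_iff)

lemma exp_lin_step:
  fixes L :: "'a::field_char_0 mpoly"
  assumes i: "i \<in> Poly_Mapping.keys g"
  shows "cf L i * exp_lin L (g - Poly_Mapping.single i 1) = of_nat (Poly_Mapping.lookup g i) * exp_lin L g"
proof -
  let ?K = "Poly_Mapping.keys g"
  let ?d = "g - Poly_Mapping.single i 1"
  obtain t where t: "Poly_Mapping.lookup g i = Suc t" using i by (metis in_keys_iff not0_implies_Suc)
  have dk: "Poly_Mapping.keys ?d \<subseteq> ?K" by (auto simp: in_keys_iff lookup_minus)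
  have ld: "Poly_Mapping.lookup ?d j = (if j = i then t else Poly_Mapping.lookup g j)" for j
    using t by (auto simp: lookup_minus lookup_single when_def)
  have fin: "finite ?K" by simp
  define R where "R = (\<Prod>j\<in>?K - {i}. cf L j ^ Poly_Mapping.lookup g j)"
  define F where "F = (\<Prod>j\<in>?K - {i}. fact (Poly_Mapping.lookup g j) :: nat)"
  have F0: "F \<noteq> 0" unfolding F_def by (simp add: prod_zero_iff)
  have Pg: "(\<Prod>j\<in>?K. cf L j ^ Poly_Mapping.lookup g j) = cf L i ^ Suc t * R"
    unfolding R_def using i t by (simp add: prod.remove)
  have Pd: "(\<Prod>j\<in>?K. cf L j ^ Poly_Mapping.lookup ?d j) = cf L i ^ t * R"
  proof -
    have "(\<Prod>j\<in>?K - {i}. cf L j ^ Poly_Mapping.lookup ?d j) = R"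
      unfolding R_def by (rule prod.cong) (auto simp: ld[simplified])
    then show ?thesis using i by (simp add: prod.remove ld[simplified])
  qed
  have Fg: "mfact g = fact (Suc t) * F"
    unfolding F_def using i t by (simp add: mfact_superset[OF fin] prod.remove)
  have Fd: "mfact ?d = fact t * F"
  proof -
    have "(\<Prod>j\<in>?K - {i}. fact (Poly_Mapping.lookup ?d j)) = F"
      unfolding F_def by (rule prod.cong) (auto simp: ld[simplified])
    then show ?thesis using i by (subst mfact_superset[OF fin dk]) (simp add: prod.remove ld[simplified])
  qed
  have F0': "(of_nat F :: 'a) \<noteq> 0" "(fact t :: 'a) \<noteq> 0" "(1 + of_nat t :: 'a) \<noteq> 0" using F0 by auto
    (metis of_nat_Suc of_nat_eq_0_iff nat.distinct(1) add.commute)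
  have "(fact t + fact t * of_nat t :: 'a) = fact (Suc t)" by (simp add: fact_Suc algebra_simps)
  then have F1: "(fact t + fact t * of_nat t :: 'a) \<noteq> 0" by (metis fact_nonzero)
  show ?thesis
    using F0' F1 unfolding exp_lin_superset[OF fin dk] exp_lin_superset[OF fin order_refl] Pg Pd Fg Fd t
    by (simp add: divide_simps fact_Suc) (simp add: algebra_simps)
qed




lemma mdeg_ge_lookup: "mdeg (g::mon) \<ge> Poly_Mapping.lookup g i"
proof (cases "i \<in> Poly_Mapping.keys g")
  case True then show ?thesis unfolding mdeg_def by (intro member_le_sum) auto
next
  case False then show ?thesis by (simp add: in_keys_iff)
qed

lemma mdeg_minus_single:
  fixes i :: nat and g :: mon
  assumes "i \<in> Poly_Mapping.keys g"
  shows "mdeg (g - Poly_Mapping.single i (1::nat)) = mdeg g - 1" "mdeg g \<ge> 1"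
proof -
  have le: "mon_le (Poly_Mapping.single i 1) g" using assms mon_le_single_iff by blast
  show "mdeg (g - Poly_Mapping.single i 1) = mdeg g - 1"
    using mdeg_diff[OF le] mdeg_single by simp
  show "mdeg g \<ge> 1" using mdeg_ge_lookup[of g i] assms by (simp add: in_keys_iff)
qed

lemma lin_power:
  fixes L :: "'a::field_char_0 mpoly"
  assumes lin: "\<forall>\<mu>\<in>Poly_Mapping.keys L. \<exists>i. \<mu> = Poly_Mapping.single i 1"
  shows "Poly_Mapping.lookup (L ^ m) g = (if mdeg g = m then of_nat (fact m) * exp_lin L g else 0)"
proof (induction m arbitrary: g)
  case 0
  show ?case
    by (auto simp: lookup_one when_def mdeg_zero_iff exp_lin_def mfact_def)
next
  case (Suc m)
  have "Poly_Mapping.lookup (L ^ Suc m) g = (\<Sum>i\<in>Poly_Mapping.keys g. cf L i * Poly_Mapping.lookup (L ^ m) (g - Poly_Mapping.single i 1))"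
    by (simp add: lookup_lin_mult[OF lin] del: One_nat_def)
  also have "\<dots> = (\<Sum>i\<in>Poly_Mapping.keys g. if mdeg g = Suc m then of_nat (fact m) * (of_nat (Poly_Mapping.lookup g i) * exp_lin L g) else 0)"
  proof (rule sum.cong[OF refl])
    fix i assume i: "i \<in> Poly_Mapping.keys g"
    note md = mdeg_minus_single[OF i]
    show "cf L i * Poly_Mapping.lookup (L ^ m) (g - Poly_Mapping.single i 1) = (if mdeg g = Suc m then of_nat (fact m) * (of_nat (Poly_Mapping.lookup g i) * exp_lin L g) else 0)"
      unfolding Suc.IH md(1) using md(2) exp_lin_step[OF i, of L, symmetric]
      by (auto simp: algebra_simps)
  qed
  also have "\<dots> = (if mdeg g = Suc m then of_nat (fact (Suc m)) * exp_lin L g else 0)"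
  proof (cases "mdeg g = Suc m")
    case True
    have "(\<Sum>i\<in>Poly_Mapping.keys g. (of_nat (Poly_Mapping.lookup g i) :: 'a)) = of_nat (Suc m)"
      using True unfolding mdeg_def by (metis of_nat_sum)
    then show ?thesis using True
      by (simp add: sum_distrib_left[symmetric] sum_distrib_right[symmetric] fact_Suc algebra_simps del: One_nat_def)
  qed simp
  finally show ?case .
qed




lemma ser_mult_keys:
  fixes P :: "'a::comm_semiring_1 mpoly"
  shows "ser_mult (poly_ser P) t a = (\<Sum>b\<in>Poly_Mapping.keys P. if mon_le b a then Poly_Mapping.lookup P b * t (a - b) else 0)"
proof -
  have "ser_mult (poly_ser P) t a = (\<Sum>b\<in>{b. mon_le b a} \<inter> Poly_Mapping.keys P. Poly_Mapping.lookup P b * t (a - b))"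
    unfolding ser_mult_def poly_ser_def
    by (rule sum.mono_neutral_right) (auto simp: finite_mon_le in_keys_iff)
  also have "\<dots> = (\<Sum>b\<in>{b\<in>Poly_Mapping.keys P. mon_le b a}. Poly_Mapping.lookup P b * t (a - b))"
    by (rule sum.cong) auto
  also have "\<dots> = (\<Sum>b\<in>Poly_Mapping.keys P. if mon_le b a then Poly_Mapping.lookup P b * t (a - b) else 0)"
    by (rule sum.inter_filter) simp
  finally show ?thesis .
qed

lemma mdeg_le_of_mon_le: "mon_le l a \<Longrightarrow> mdeg l \<le> mdeg a"
  by (metis mon_le_diff mdeg_add le_add1)

lemma conv_identity:
  fixes P L :: "'a::field_char_0 mpoly"
  assumes lin: "\<forall>\<mu>\<in>Poly_Mapping.keys L. \<exists>i. \<mu> = Poly_Mapping.single i 1"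
    and hom: "homog j P" and deg: "mdeg a = j + m"
  shows "of_nat (fact m) * ser_mult (poly_ser P) (exp_lin L) a = Poly_Mapping.lookup (P * L ^ m) a"
  unfolding ser_mult_keys lookup_mult_keys sum_distrib_left
proof (rule sum.cong[OF refl])
  fix b assume b: "b \<in> Poly_Mapping.keys P"
  then have mb: "mdeg b = j" using hom unfolding homog_def by blast
  show "of_nat (fact m) * (if mon_le b a then Poly_Mapping.lookup P b * exp_lin L (a - b) else 0) =
        (if mon_le b a then Poly_Mapping.lookup P b * Poly_Mapping.lookup (L ^ m) (a - b) else 0)"
    using mb deg by (auto simp: lin_power[OF lin] mdeg_diff)
qed

lemma ser_mult_lin:
  fixes P :: "nat \<Rightarrow> 'a::comm_semiring_1 series"
  shows "ser_mult (\<lambda>b. c * (\<Sum>j\<in>J. x j * P j b)) t a = c * (\<Sum>j\<in>J. x j * ser_mult (P j) t a)"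
  unfolding ser_mult_def
  by (simp add: sum_distrib_left sum_distrib_right mult.assoc) (rule sum.swap)

lemma lookup_Const_mult:
  fixes c :: "'a::comm_semiring_1"
  shows "Poly_Mapping.lookup (Const c * X) b = c * Poly_Mapping.lookup X b"
proof (cases "c = 0")
  case True then show ?thesis by (simp add: Const_def)
next
  case False
  have "mon_le 0 b" by (simp add: mon_le_def)
  then show ?thesis using False by (simp add: Const_def lookup_mult_keys)
qed

lemma keys_sum_sub: "Poly_Mapping.keys (sum f A) \<subseteq> (\<Union>a\<in>A. Poly_Mapping.keys (f a))"
proof
  fix x assume "x \<in> Poly_Mapping.keys (sum f A)"
  then have "(\<Sum>a\<in>A. Poly_Mapping.lookup (f a) x) \<noteq> 0" by (simp add: in_keys_iff lookup_sum)
  then obtain a where "a \<in> A" "Poly_Mapping.lookup (f a) x \<noteq> 0" by (meson sum.not_neutral_contains_not_neutral)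
  then show "x \<in> (\<Union>a\<in>A. Poly_Mapping.keys (f a))" by (auto simp: in_keys_iff)
qed

lemma lin_L:
  fixes \<xi> :: "nat \<Rightarrow> 'a::comm_semiring_1"
  shows "\<forall>\<mu>\<in>Poly_Mapping.keys (Var 0 + (\<Sum>j=1..n. Const (\<xi> j) * Var j)). \<exists>i. \<mu> = Poly_Mapping.single i 1"
proof
  fix \<mu> assume m: "\<mu> \<in> Poly_Mapping.keys (Var 0 + (\<Sum>j=1..n. Const (\<xi> j) * Var j) :: 'a mpoly)"
  have cv: "Const (\<xi> j) * Var j = Poly_Mapping.single (Poly_Mapping.single j 1) (\<xi> j)" for j
    by (simp add: Const_def Var_def mult_single)
  have m2: "\<mu> \<in> Poly_Mapping.keys (Var 0 :: 'a mpoly) \<union> Poly_Mapping.keys (\<Sum>j=1..n. Const (\<xi> j) * Var j :: 'a mpoly)"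
    using m keys_add by (rule subsetD[rotated])
  show "\<exists>i. \<mu> = Poly_Mapping.single i 1"
  proof (cases "\<mu> \<in> Poly_Mapping.keys (Var 0 :: 'a mpoly)")
    case True
    then have "\<mu> = Poly_Mapping.single 0 1" by (simp add: Var_def split: if_splits)
    then show ?thesis by (rule exI)
  next
    case False
    then have "\<mu> \<in> Poly_Mapping.keys (\<Sum>j=1..n. Const (\<xi> j) * Var j :: 'a mpoly)" using m2 by simp
    then have "\<mu> \<in> (\<Union>j\<in>{1..n}. Poly_Mapping.keys (Const (\<xi> j) * Var j :: 'a mpoly))"
      by (rule subsetD[OF keys_sum_sub])
    then obtain j where "\<mu> \<in> Poly_Mapping.keys (Poly_Mapping.single (Poly_Mapping.single j 1) (\<xi> j))"
      unfolding cv by (rule UN_E)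
    then have "\<mu> = Poly_Mapping.single j 1" by (simp split: if_splits)
    then show ?thesis by (rule exI)
  qed
qed




lemma apply_dual_superset:
  "finite K \<Longrightarrow> Poly_Mapping.keys p \<subseteq> K \<Longrightarrow>
   apply_dual s p = (\<Sum>a\<in>K. Poly_Mapping.lookup p a * dual_val s a)"
  unfolding apply_dual_def by (rule sum.mono_neutral_left) (auto simp: in_keys_iff)

lemma apply_dual_add: "apply_dual s (p + q) = apply_dual s p + apply_dual s q"
proof -
  let ?K = "Poly_Mapping.keys p \<union> Poly_Mapping.keys q"
  have "apply_dual s (p + q) = (\<Sum>a\<in>?K. Poly_Mapping.lookup (p + q) a * dual_val s a)"
    using keys_add[of p q] by (intro apply_dual_superset) auto
  also have "\<dots> = (\<Sum>a\<in>?K. Poly_Mapping.lookup p a * dual_val s a) + (\<Sum>a\<in>?K. Poly_Mapping.lookup q a * dual_val s a)"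
    by (simp add: lookup_add distrib_right sum.distrib)
  also have "\<dots> = apply_dual s p + apply_dual s q"
    by (simp add: apply_dual_superset[of ?K p] apply_dual_superset[of ?K q])
  finally show ?thesis .
qed

lemma gen_case:
  fixes \<phi> :: "'a::field_char_0 series"
  assumes g: "homog e g" "star_zero n g \<phi>" and q: "inS n q"
  shows "apply_dual (\<lambda>a. if mdeg a = d then \<phi> a else 0) (q * g) = 0"
proof -
  let ?h = "\<lambda>b. if mdeg b + e = d then Poly_Mapping.lookup q b else 0"
  define q' where "q' = Abs_poly_mapping ?h"
  have fin: "finite {b. ?h b \<noteq> 0}"
    by (rule finite_subset[of _ "Poly_Mapping.keys q"]) (auto simp: in_keys_iff)
  have lq': "Poly_Mapping.lookup q' b = ?h b" for b
    unfolding q'_def using fin by simp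
  have "inS n q'" using q unfolding inS_def poly_in_vars_def
    by (auto simp: in_keys_iff lq' split: if_splits)
  then have z: "apply_dual \<phi> (g * q') = 0" using g(2) unfolding star_zero_def by blast
  have mg: "mdeg l = e" if "l \<in> Poly_Mapping.keys g" for l using g(1) that unfolding homog_def by blast
  have pw: "Poly_Mapping.lookup (q * g) a * dual_val (\<lambda>a. if mdeg a = d then \<phi> a else 0) a =
            Poly_Mapping.lookup (g * q') a * dual_val \<phi> a" for a
  proof (cases "mdeg a = d")
    case True
    have "Poly_Mapping.lookup (q * g) a = Poly_Mapping.lookup (g * q') a"
      unfolding mult.commute[of q g] lookup_mult_keys
    proof (rule sum.cong[OF refl])
      fix l assume l: "l \<in> Poly_Mapping.keys g"
      show "(if mon_le l a then Poly_Mapping.lookup g l * Poly_Mapping.lookup q (a - l) else 0) =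
            (if mon_le l a then Poly_Mapping.lookup g l * Poly_Mapping.lookup q' (a - l) else 0)"
        using mg[OF l] True by (auto simp: lq' mdeg_diff dest: mdeg_le_of_mon_le)
    qed
    then show ?thesis using True by (simp add: dual_val_def)
  next
    case False
    have "Poly_Mapping.lookup (g * q') a = 0"
      unfolding lookup_mult_keys
    proof (rule sum.neutral, intro ballI)
      fix l assume l: "l \<in> Poly_Mapping.keys g"
      show "(if mon_le l a then Poly_Mapping.lookup g l * Poly_Mapping.lookup q' (a - l) else 0) = 0"
        using mg[OF l] False by (auto simp: lq' mdeg_diff dest: mdeg_le_of_mon_le)
    qed
    then show ?thesis using False by (simp add: dual_val_def)
  qed
  let ?K = "Poly_Mapping.keys (q * g) \<union> Poly_Mapping.keys (g * q')"
  have "apply_dual (\<lambda>a. if mdeg a = d then \<phi> a else 0) (q * g) =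
        (\<Sum>a\<in>?K. Poly_Mapping.lookup (q * g) a * dual_val (\<lambda>a. if mdeg a = d then \<phi> a else 0) a)"
    by (rule apply_dual_superset) auto
  also have "\<dots> = (\<Sum>a\<in>?K. Poly_Mapping.lookup (g * q') a * dual_val \<phi> a)"
    using pw by simp
  also have "\<dots> = apply_dual \<phi> (g * q')"
    by (rule apply_dual_superset[symmetric]) auto
  finally show ?thesis using z by simp
qed

lemma ideal_part:
  fixes \<phi> :: "'a::field_char_0 series"
  assumes "p \<in> I_phi n \<phi>"
  shows "apply_dual (\<lambda>a. if mdeg a = d then \<phi> a else 0) p = 0"
  using assms unfolding I_phi_def
proof (induction rule: ideal_gen.induct)
  case zero then show ?case by (simp add: apply_dual_def)
next
  case (gen g q) then show ?case using gen_case by blast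
next
  case (add a b) then show ?case by (simp add: apply_dual_add)
qed




theorem lemma5p1:
  fixes n d s :: nat
    and f :: "'a::field_char_0 mpoly"
    and k :: "nat \<Rightarrow> nat"
    and \<omega> L :: "nat \<Rightarrow> 'a mpoly"
    and \<xi> :: "nat \<Rightarrow> nat \<Rightarrow> 'a"
    and \<omega>j :: "nat \<Rightarrow> nat \<Rightarrow> 'a mpoly"
  assumes f_deg: "inSd n d f"
    and GAD: "f = (\<Sum>i=1..s. \<omega> i * L i ^ (d - k i))"
    and k_le: "\<And>i. i \<in> {1..s} \<Longrightarrow> k i \<le> d"
    and \<omega>_deg: "\<And>i. i \<in> {1..s} \<Longrightarrow> inSd n (k i) (\<omega> i)"
    and L_def: "\<And>i. i \<in> {1..s} \<Longrightarrow>
                 L i = Var 0 + (\<Sum>j=1..n. Const (\<xi> i j) * Var j)"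
    and non_prop: "\<And>i j c. i \<in> {1..s} \<Longrightarrow> j \<in> {1..s} \<Longrightarrow> i \<noteq> j \<Longrightarrow> L i \<noteq> Const c * L j"
    and not_dvd: "\<And>i. i \<in> {1..s} \<Longrightarrow> \<not> (\<exists>q. inS n q \<and> \<omega> i = L i * q)"
    and \<omega>j_deg: "\<And>i j. i \<in> {1..s} \<Longrightarrow> j \<le> k i \<Longrightarrow>
                 poly_in_vars {1..n} (\<omega>j i j) \<and> homog j (\<omega>j i j)"
    and \<omega>j_dec: "\<And>i. i \<in> {1..s} \<Longrightarrow> \<omega> i = (\<Sum>j=0..k i. \<omega>j i j * L i ^ (k i - j))"
  shows "\<forall>p \<in> I_phi n
            (\<lambda>\<alpha>. \<Sum>i=1..s. ser_mult
                 (poly_ser (Const (1 / of_nat (fact d)) *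
                            (\<Sum>j=0..k i. Const (of_nat (fact (d - j))) * \<omega>j i j)))
                 (exp_lin (L i)) \<alpha>).
           homog d p \<longrightarrow> apply_dual (fstar d f) p = 0"
proof -
  define c :: 'a where "c = 1 / of_nat (fact d)"
  define PHI where "PHI = (\<lambda>\<alpha>. \<Sum>i=1..s. ser_mult
                 (poly_ser (Const (1 / of_nat (fact d)) *
                            (\<Sum>j=0..k i. Const (of_nat (fact (d - j))) * \<omega>j i j)))
                 (exp_lin (L i)) \<alpha>)"
  have hf: "homog d f" using f_deg unfolding inSd_def by simp
  have trm: "ser_mult (poly_ser (Const (1 / of_nat (fact d)) *
                            (\<Sum>j=0..k i. Const (of_nat (fact (d - j))) * \<omega>j i j)))
                 (exp_lin (L i)) a = c * Poly_Mapping.lookup (\<omega> i * L i ^ (d - k i)) a"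
    if i: "i \<in> {1..s}" and a: "mdeg a = d" for i a
  proof -
    have lin: "\<forall>\<mu>\<in>Poly_Mapping.keys (L i). \<exists>i. \<mu> = Poly_Mapping.single i 1"
      unfolding L_def[OF i] by (rule lin_L)
    have ps: "poly_ser (Const (1 / of_nat (fact d)) *
                            (\<Sum>j=0..k i. Const (of_nat (fact (d - j))) * \<omega>j i j)) =
          (\<lambda>b. c * (\<Sum>j\<in>{0..k i}. of_nat (fact (d - j)) * poly_ser (\<omega>j i j) b))"
      by (simp add: fun_eq_iff poly_ser_def lookup_Const_mult lookup_sum c_def)
    have "ser_mult (poly_ser (Const (1 / of_nat (fact d)) *
                            (\<Sum>j=0..k i. Const (of_nat (fact (d - j))) * \<omega>j i j)))
                 (exp_lin (L i)) a = c * (\<Sum>j\<in>{0..k i}. of_nat (fact (d - j)) * ser_mult (poly_ser (\<omega>j i j)) (exp_lin (L i)) a)"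
      unfolding ps by (rule ser_mult_lin)
    also have "\<dots> = c * (\<Sum>j\<in>{0..k i}. Poly_Mapping.lookup (\<omega>j i j * L i ^ (d - j)) a)"
    proof -
      have "of_nat (fact (d - j)) * ser_mult (poly_ser (\<omega>j i j)) (exp_lin (L i)) a = Poly_Mapping.lookup (\<omega>j i j * L i ^ (d - j)) a"
        if j: "j \<in> {0..k i}" for j
        using j k_le[OF i] \<omega>j_deg[OF i, of j] a by (intro conv_identity[OF lin]) auto
      then show ?thesis by (intro arg_cong[where f="(*) c"] sum.cong) auto
    qed
    also have "(\<Sum>j\<in>{0..k i}. Poly_Mapping.lookup (\<omega>j i j * L i ^ (d - j)) a) =
               Poly_Mapping.lookup (\<omega> i * L i ^ (d - k i)) a"
    proof -
      have "\<omega> i * L i ^ (d - k i) = (\<Sum>j\<in>{0..k i}. \<omega>j i j * L i ^ (d - j))"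
        unfolding \<omega>j_dec[OF i] sum_distrib_right
      proof (rule sum.cong[OF refl])
        fix j assume "j \<in> {0..k i}"
        then have "d - j = (k i - j) + (d - k i)" using k_le[OF i] by auto
        then show "\<omega>j i j * L i ^ (k i - j) * L i ^ (d - k i) = \<omega>j i j * L i ^ (d - j)"
          by (simp add: power_add mult.assoc)
      qed
      then show ?thesis by (simp add: lookup_sum)
    qed
    finally show ?thesis .
  qed
  have eq: "fstar d f = (\<lambda>a. if mdeg a = d then PHI a else 0)"
  proof
    fix a
    show "fstar d f a = (if mdeg a = d then PHI a else 0)"
    proof (cases "mdeg a = d")
      case True
      have "PHI a = (\<Sum>i=1..s. c * Poly_Mapping.lookup (\<omega> i * L i ^ (d - k i)) a)"
        unfolding PHI_def using trm True by simp
      also have "\<dots> = c * Poly_Mapping.lookup f a"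
        by (simp add: GAD lookup_sum sum_distrib_left)
      finally show ?thesis using True by (simp add: fstar_def c_def)
    next
      case False
      then have "a \<notin> Poly_Mapping.keys f" using hf unfolding homog_def by blast
      then show ?thesis using False by (simp add: fstar_def in_keys_iff)
    qed
  qed
  have "\<forall>p\<in>I_phi n PHI. homog d p \<longrightarrow> apply_dual (fstar d f) p = 0"
  proof (intro ballI impI)
    fix p assume "p \<in> I_phi n PHI"
    then have "apply_dual (\<lambda>a. if mdeg a = d then PHI a else 0) p = 0" by (rule ideal_part)
    then show "apply_dual (fstar d f) p = 0" by (simp only: eq)
  qed
  then show ?thesis unfolding PHI_def .
qed



end
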